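(* Let $K$ be an algebraically closed field of characteristic $0$ and let $d,n$ be integers with $1<d<n$ and $\gcd(n,d)=1$. Let $f(x)\in K[x]$ be a monic polynomial of degree $n$ without repeated roots, $\mathcal{C}_{f,d}$ the smooth projective model of $y^d=f(x)$, $m_1:=n+d$, and $a\in K$. The following are equivalent: (a) there exists $P\in\mathcal{C}_{f,d}(K)$ of order $m_1$ with $x(P)=a$; (b) there exist $a_1\in K$ and $v(x)\in K[x]$ such that $a_1\neq a$, $d-1\leq \deg(v)<m_1/d=(n+d)/d$, $v(a_1)\neq 0$, and $f(x)=\dfrac{(x-a)^{m_1}-v(x)^d}{(x-a_1)^d}$. If these equivalent conditions hold, then $m_1=n+d>d^2-d$.
   Context: $\mathcal{C}_{f,d}$ has a unique point at infinity $O$, and $\mathcal{C}_{f,d}\setminus\{O\}$ is identified with the affine curve $y^d=f(x)$, so $x(P)$ denotes the abscissa of $P\neq O$. $\mathcal{C}_{f,d}$ is identified with its image in its Jacobian via $P\mapsto \operatorname{cl}((P)-(O))$ (linear equivalence class); $P$ has order $m$ if $\operatorname{cl}((P)-(O))$ has order $m$ in $J(\mathcal{C}_{f,d})(K)$. *)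

theory Defs
  imports "HOL-Computational_Algebra.Polynomial"
begin

definition alg_closed :: "'a::field itself \<Rightarrow> bool" where
  "alg_closed _ \<longleftrightarrow> (\<forall>p::'a poly. degree p \<ge> 1 \<longrightarrow> (\<exists>x. poly p x = 0))"

text \<open>Affine points of the curve y^d = f(x), i.e. the points of C_{f,d}(K) other than O.\<close>
definition on_curve :: "'a::field poly \<Rightarrow> nat \<Rightarrow> 'a \<times> 'a \<Rightarrow> bool" where
  "on_curve f d Q \<longleftrightarrow> snd Q ^ d = poly f (fst Q)"

text \<open>A regular function on the affine curve, written in the normal form
  h = sum_{i<d} p_i(x) y^i (basis of K[x,y]/(y^d - f) over K[x]).\<close>
definition reg_eval :: "nat \<Rightarrow> (nat \<Rightarrow> 'a::field poly) \<Rightarrow> 'a \<times> 'a \<Rightarrow> 'a" where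
  "reg_eval d p Q = (\<Sum>i<d. poly (p i) (fst Q) * snd Q ^ i)"

text \<open>Pole order at the unique point at infinity O: ord_O(x) = -d, ord_O(y) = -n,
  and since gcd(n,d)=1 the orders of the summands are distinct.\<close>
definition pole_order_O :: "nat \<Rightarrow> nat \<Rightarrow> (nat \<Rightarrow> 'a::field poly) \<Rightarrow> nat" where
  "pole_order_O n d p = Max {d * degree (p i) + n * i | i. i < d \<and> p i \<noteq> 0}"

text \<open>k((P) - (O)) is a principal divisor (k > 0): it is the divisor of a nonzero function
  regular away from O, i.e. of a nonzero h in K[x,y]/(y^d-f) with pole order k at O
  whose only zero on the curve is P.\<close>
definition multiple_principal :: "'a::field poly \<Rightarrow> nat \<Rightarrow> 'a \<times> 'a \<Rightarrow> nat \<Rightarrow> bool" where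
  "multiple_principal f d P k \<longleftrightarrow>
     (\<exists>p::nat \<Rightarrow> 'a poly. (\<exists>i<d. p i \<noteq> 0) \<and>
        pole_order_O (degree f) d p = k \<and>
        {Q. on_curve f d Q \<and> reg_eval d p Q = 0} = {P})"

text \<open>P (an affine point) has order m in the Jacobian: cl((P)-(O)) has order m.\<close>
definition point_order :: "'a::field poly \<Rightarrow> nat \<Rightarrow> 'a \<times> 'a \<Rightarrow> nat \<Rightarrow> bool" where
  "point_order f d P m \<longleftrightarrow> 0 < m \<and> multiple_principal f d P m \<and>
     (\<forall>k. 0 < k \<and> k < m \<longrightarrow> \<not> multiple_principal f d P k)"

end

theory Submission
  imports Defs
begin

lemma ac_root:
  assumes "alg_closed TYPE('a::field)" "1 \<le> degree (p::'a poly)"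
  shows "\<exists>x. poly p x = 0"
  using assms unfolding alg_closed_def by blast

lemma ac_nth_root:
  assumes "alg_closed TYPE('a::field)" "0 < d"
  shows "\<exists>y::'a. y ^ d = c"
proof -
  let ?p = "monom (1::'a) d - [:c:]"
  have "coeff ?p d = 1" using assms(2) by (cases d) auto
  hence "d \<le> degree ?p" by (intro le_degree) simp
  hence "1 \<le> degree ?p" using assms(2) by linarith
  then obtain x where "poly ?p x = 0" using ac_root[OF assms(1)] by blast
  thus ?thesis by (auto simp: poly_monom)
qed

lemma ac_unity:
  assumes "alg_closed TYPE('a::field_char_0)" "2 \<le> d"
  shows "\<exists>z::'a. z ^ d = 1 \<and> z \<noteq> 1"
proof -
  let ?q = "\<Sum>i<d. monom (1::'a) i"
  have "coeff ?q 1 = 1" using assms(2) by (simp add: coeff_sum)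
  hence "1 \<le> degree ?q" by (intro le_degree) simp
  then obtain z where z: "poly ?q z = 0" using ac_root[OF assms(1)] by blast
  hence zs: "(\<Sum>i<d. z ^ i) = 0" by (simp add: poly_sum poly_monom)
  have "z \<noteq> 1" using zs assms(2) by auto
  moreover have "z ^ d - 1 = 0" using power_diff_1_eq[of z d] zs by simp
  ultimately show ?thesis by auto
qed

lemma only_root_dvd:
  assumes "alg_closed TYPE('a::field)"
  shows "(N::'a poly) \<noteq> 0 \<Longrightarrow> (\<forall>x. poly N x = 0 \<longrightarrow> x = a) \<Longrightarrow> [:-a,1:] ^ degree N dvd N"
proof (induction "degree N" arbitrary: N)
  case 0
  then show ?case by simp
next
  case (Suc k)
  have N0: "N \<noteq> 0" and R: "\<forall>x. poly N x = 0 \<longrightarrow> x = a" and k: "Suc k = degree N" using Suc.prems Suc.hyps by auto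
  obtain r where r: "poly N r = 0" using ac_root[OF assms, of N] k by auto
  hence "r = a" using R by blast
  then obtain M where M: "N = [:-a,1:] * M" using r poly_eq_0_iff_dvd by blast
  have M0: "M \<noteq> 0" using M N0 by (metis mult_zero_right)
  have dM: "degree N = Suc (degree M)" unfolding M using M0 by (subst degree_mult_eq) simp_all
  have kM: "k = degree M" using dM k by simp
  have RM: "\<forall>x. poly M x = 0 \<longrightarrow> x = a" using M R by simp
  have "[:-a,1:] ^ degree M dvd M" using Suc.hyps(1)[OF kM M0 RM] .
  hence "[:-a,1:] * [:-a,1:] ^ degree M dvd [:-a,1:] * M" by (rule mult_dvd_mono[OF dvd_refl])
  thus ?case using M dM by simp
qed

lemma cancel_dvd:
  fixes P S :: "'a::field poly"
  assumes "[:-a,1:] ^ e dvd P * S" "poly S a \<noteq> 0"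
  shows "[:-a,1:] ^ e dvd P"
proof (cases "P = 0")
  case False
  have S0: "S \<noteq> 0" using assms(2) by auto
  have "order a S = 0" using assms(2) by (rule order_0I)
  hence "order a (P * S) = order a P" using False S0 by (simp add: order_mult)
  thus ?thesis using assms(1) False S0 by (simp add: order_divides)
qed simp

lemma key_pow:
  fixes A B :: "'a::field_char_0 poly"
  assumes "[:-a,1:] ^ e dvd A ^ d - B ^ d" "poly B a \<noteq> 0" "1 \<le> e" "0 < d"
    "degree A < e" "degree B < e"
  shows "A ^ d = B ^ d"
proof -
  have "[:-a,1:] dvd [:-a,1:] ^ e" using assms(3) by (intro dvd_power) simp
  hence "[:-a,1:] dvd A ^ d - B ^ d" using assms(1) by (rule dvd_trans)
  hence ev: "poly A a ^ d = poly B a ^ d" using poly_eq_0_iff_dvd[of "A^d - B^d" a] by simp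
  hence Aa: "poly A a \<noteq> 0" using assms(2,4) by (metis power_not_zero zero_power gr0_implies_Suc)
  define \<xi> where "\<xi> = poly A a / poly B a"
  have xi: "\<xi> ^ d = 1" using ev assms(2) by (simp add: \<xi>_def power_divide)
  define Cq where "Cq = smult \<xi> B"
  have Cd: "Cq ^ d = B ^ d" by (simp add: Cq_def smult_power xi)
  have Ca: "poly Cq a = poly A a" using assms(2) by (simp add: Cq_def \<xi>_def)
  obtain m where m: "d = Suc m" using assms(4) gr0_implies_Suc by blast
  define S where "S = (\<Sum>p<Suc m. (A ^ p) * Cq ^ (m - p))"
  have fac: "A ^ d - Cq ^ d = (A - Cq) * S" unfolding S_def m by (rule diff_power_eq_sum)
  have "poly S a = (\<Sum>p<Suc m. poly A a ^ p * poly A a ^ (m - p))"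
    by (simp add: S_def poly_sum Ca)
  also have "\<dots> = (\<Sum>p<Suc m. poly A a ^ m)"
    by (intro sum.cong refl) (simp add: power_add[symmetric])
  also have "\<dots> = of_nat d * poly A a ^ m" by (simp add: m)
  finally have "poly S a \<noteq> 0" using Aa assms(4) by simp
  hence dv: "[:-a,1:] ^ e dvd A - Cq" using cancel_dvd[where a=a and e=e and P="A - Cq" and S=S] assms(1) fac Cd by simp
  have "degree (A - Cq) < e" using assms(5,6) by (intro degree_diff_less) (simp_all add: Cq_def)
  hence "A - Cq = 0"
    using dv by (metis degree_linear_power dvd_imp_degree_le leD)
  thus ?thesis using Cd by simp
qed

lemma reg_eval2:
  assumes "2 \<le> d" "\<forall>i. 2 \<le> i \<and> i < d \<longrightarrow> p i = 0"
  shows "reg_eval d p Q = poly (p 0) (fst Q) + poly (p 1) (fst Q) * snd Q"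
proof -
  have "reg_eval d p Q = (\<Sum>i<2. poly (p i) (fst Q) * snd Q ^ i)"
    unfolding reg_eval_def
    by (rule sum.mono_neutral_right) (use assms in auto)
  also have "\<dots> = poly (p 0) (fst Q) + poly (p 1) (fst Q) * snd Q"
    by (simp add: numeral_2_eq_2)
  finally show ?thesis .
qed

lemma pole_set_eq:
  "{d * degree (p i) + n * i | i. i < d \<and> p i \<noteq> 0} = (\<lambda>i. d * degree (p i) + n * i) ` {i. i < d \<and> p i \<noteq> 0}"
  by auto

lemma pole_le:
  assumes "i < d" "p i \<noteq> 0"
  shows "d * degree (p i) + n * i \<le> pole_order_O n d p"
  unfolding pole_order_O_def pole_set_eq
  by (rule Max_ge) (use assms in auto)

lemma pole_attained:
  assumes "\<exists>i<d. p i \<noteq> 0"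
  shows "\<exists>i<d. p i \<noteq> 0 \<and> pole_order_O n d p = d * degree (p i) + n * i"
proof -
  have "pole_order_O n d p \<in> (\<lambda>i. d * degree (p i) + n * i) ` {i. i < d \<and> p i \<noteq> 0}"
    unfolding pole_order_O_def pole_set_eq
    by (rule Max_in) (use assms in auto)
  thus ?thesis by auto
qed

lemma pole_eqI:
  assumes "\<forall>i<d. p i \<noteq> 0 \<longrightarrow> d * degree (p i) + n * i \<le> k"
    "j < d" "p j \<noteq> 0" "d * degree (p j) + n * j = k"
  shows "pole_order_O n d p = k"
  unfolding pole_order_O_def pole_set_eq
  by (rule Max_eqI) (use assms in force)+

lemma norm_root:
  fixes f v w :: "'a::field poly"
  assumes ac: "alg_closed TYPE('a)" and d: "0 < d"
    and Z: "\<forall>x y. y ^ d = poly f x \<longrightarrow> poly v x + poly w x * y = 0 \<longrightarrow> x = a"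
    and r: "poly (v ^ d - (- w) ^ d * f) x0 = 0"
  shows "x0 = a"
proof (cases "poly w x0 = 0")
  case True
  hence "poly v x0 ^ d = 0" using r d by (simp add: zero_power)
  hence v0: "poly v x0 = 0" by simp
  obtain y where "y ^ d = poly f x0" using ac_nth_root[OF ac d] by blast
  thus ?thesis using Z v0 True by auto
next
  case False
  define y where "y = (- poly v x0) / poly w x0"
  have e: "poly v x0 ^ d = (- poly w x0) ^ d * poly f x0" using r by simp
  have "y ^ d = (- poly v x0) ^ d / poly w x0 ^ d" unfolding y_def by (rule power_divide)
  also have "(- poly v x0) ^ d = (-1) ^ d * poly v x0 ^ d" by (metis power_minus)
  also have "\<dots> = (-1) ^ d * ((- poly w x0) ^ d * poly f x0)" using e by simp
  also have "(- poly w x0) ^ d = (-1) ^ d * poly w x0 ^ d" by (metis power_minus)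
  finally have "y ^ d = poly f x0" using False
    by (simp add: field_simps power_mult_distrib[symmetric])
  moreover have "poly v x0 + poly w x0 * y = 0" using False by (simp add: y_def)
  ultimately show ?thesis using Z by blast
qed

lemma sq_of_dvd:
  fixes f :: "'a::field poly"
  assumes "rsquarefree f" "[:-a,1:] ^ e dvd f" "2 \<le> e"
  shows False
proof -
  have "[:-a,1:] ^ 2 dvd f" using assms(2,3) by (metis le_imp_power_dvd dvd_trans)
  hence "2 \<le> order a f" using assms(1) by (simp add: order_divides rsquarefree_def)
  moreover have "order a f = 0 \<or> order a f = 1" using assms(1) unfolding rsquarefree_def by blast
  ultimately show False by linarith
qed

lemma cancel_aux:
  fixes f V U Xa :: "'a::field poly"
  assumes V: "V ^ d = Xa ^ d * U ^ d" and P: "Xa ^ (n + d) = Xa ^ d * Xa ^ n" and I: "f * Xa ^ d = Xa ^ (n + d) - V ^ d"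
  shows "Xa ^ d * f = Xa ^ d * (Xa ^ n - U ^ d)"
proof -
  have "Xa ^ d * f = f * Xa ^ d" by (rule mult.commute)
  also have "\<dots> = Xa ^ d * Xa ^ n - Xa ^ d * U ^ d" unfolding I V P ..
  also have "\<dots> = Xa ^ d * (Xa ^ n - U ^ d)" by (rule right_diff_distrib[symmetric])
  finally show ?thesis .
qed

lemma cancel_aux2:
  fixes f V U Xa Y :: "'a::field poly"
  assumes V: "V ^ d = Xa ^ d * U ^ d" and P: "Xa ^ (n + d) = Xa ^ d * Xa ^ n" and I: "f * Y = Xa ^ (n + d) - V ^ d"
  shows "f * Y = Xa ^ d * (Xa ^ n - U ^ d)"
proof -
  have "f * Y = Xa ^ d * Xa ^ n - Xa ^ d * U ^ d" unfolding I V P ..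
  also have "\<dots> = Xa ^ d * (Xa ^ n - U ^ d)" by (rule right_diff_distrib[symmetric])
  finally show ?thesis .
qed

lemma sm: "smult a p = [:a:] * p" by simp

lemma sq_contra:
  fixes f V :: "'a::field poly"
  assumes sq: "rsquarefree f" and I: "f * [:-a,1:] ^ d = [:-a,1:] ^ (n + d) - V ^ d"
    and fa: "poly f a = 0" and d: "2 \<le> d" "d \<le> n"
  shows False
proof -
  have "poly V a ^ d = 0" using arg_cong[OF I, of "\<lambda>p. poly p a"] d by (simp add: zero_power)
  hence "poly V a = 0" by simp
  then obtain U where U: "V = [:-a,1:] * U" using poly_eq_0_iff_dvd by blast
  define Xa where "Xa = [:-a,1:]"
  have Xa0: "Xa \<noteq> 0" by (simp add: Xa_def)
  have "V ^ d = Xa ^ d * U ^ d" unfolding U Xa_def by (rule power_mult_distrib)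
  moreover have "Xa ^ (n + d) = Xa ^ d * Xa ^ n" by (simp add: power_add mult.commute)
  ultimately have "Xa ^ d * f = Xa ^ d * (Xa ^ n - U ^ d)"
    using I unfolding Xa_def[symmetric] by (rule cancel_aux)
  hence f: "f = [:-a,1:] ^ n - U ^ d" using Xa0 by (simp add: Xa_def)
  have "poly U a ^ d = 0" using arg_cong[OF f, of "\<lambda>p. poly p a"] fa d by (simp add: zero_power)
  hence "poly U a = 0" by simp
  hence "[:-a,1:] dvd U" using poly_eq_0_iff_dvd by blast
  hence "[:-a,1:] ^ d dvd U ^ d" by (rule dvd_power_same)
  moreover have "[:-a,1:] ^ d dvd [:-a,1:] ^ n" using d by (simp add: le_imp_power_dvd)
  ultimately have "[:-a,1:] ^ d dvd f" unfolding f by (metis dvd_diff)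
  thus False using sq_of_dvd[OF sq _ d(1)] by blast
qed

lemma Va_nonzero:
  fixes f V :: "'a::field poly"
  assumes sq: "rsquarefree f" and I: "f * [:-a1,1:] ^ d = [:-a,1:] ^ (n + d) - V ^ d"
    and a1: "a1 \<noteq> a" and d: "2 \<le> d"
  shows "poly V a \<noteq> 0"
proof
  assume "poly V a = 0"
  then obtain U where U: "V = [:-a,1:] * U" using poly_eq_0_iff_dvd by blast
  define Xa where "Xa = [:-a,1:]"
  have "V ^ d = Xa ^ d * U ^ d" unfolding U Xa_def by (rule power_mult_distrib)
  moreover have "Xa ^ (n + d) = Xa ^ d * Xa ^ n" by (simp add: power_add mult.commute)
  ultimately have "f * [:-a1,1:] ^ d = Xa ^ d * (Xa ^ n - U ^ d)"
    using I unfolding Xa_def[symmetric] by (rule cancel_aux2)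
  hence "f * [:-a1,1:] ^ d = [:-a,1:] ^ d * ([:-a,1:] ^ n - U ^ d)" by (simp add: Xa_def)
  hence "[:-a,1:] ^ d dvd f * [:-a1,1:] ^ d" by simp
  moreover have "poly ([:-a1,1:] ^ d) a \<noteq> 0" using a1 by simp
  ultimately have "[:-a,1:] ^ d dvd f" by (rule cancel_dvd)
  thus False using sq_of_dvd[OF sq _ d] by blast
qed

lemma iden_gen:
  fixes X P U V V' :: "'a::comm_ring_1 poly"
  shows "smult c (X * P - U * V) - X * (smult c P - smult e (U * V')) = U * (smult e (X * V') - smult c V)"
  unfolding sm by (simp add: algebra_simps)

lemma post:
  fixes f V :: "'a::field_char_0 poly"
  assumes I: "f * [:-a1,1:] ^ d = [:-a,1:] ^ (n + d) - V ^ d"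
    and a1: "a1 \<noteq> a" and d: "2 \<le> d" and dV: "d * degree V < n + d"
  shows "poly V a1 \<noteq> 0 \<and> d - 1 \<le> degree V"
proof -
  have Va1: "poly V a1 \<noteq> 0"
  proof
    assume "poly V a1 = 0"
    hence "(a1 - a) ^ (n + d) = 0" using arg_cong[OF I, of "\<lambda>p. poly p a1"] d by (simp add: zero_power)
    thus False using a1 by simp
  qed
  define Xa where "Xa = [:-a,1:]"
  define X1 where "X1 = [:-a1,1:]"
  define g where "g = f * X1 ^ d"
  define E where "E = smult (of_nat d) (Xa * pderiv V) - smult (of_nat (n + d)) V"
  obtain d' where d': "d = Suc d'" using d by (cases d) auto
  have g2: "g = Xa ^ (n + d) - V ^ d" using I by (simp add: g_def Xa_def X1_def)
  have pXa: "pderiv Xa = 1" by (simp add: Xa_def pderiv_pCons)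
  have pX1: "pderiv X1 = 1" by (simp add: X1_def pderiv_pCons)
  have pg: "pderiv g = smult (of_nat (n + d)) (Xa ^ (n + d - 1)) - smult (of_nat d) (V ^ (d - 1) * pderiv V)"
    unfolding g2 by (simp add: pderiv_diff pderiv_power pXa)
  have XX: "Xa * Xa ^ (n + d - 1) = Xa ^ (n + d)" using d' by simp
  have VV: "V ^ (d - 1) * V = V ^ d" using d' by simp
  have g3: "g = Xa * Xa ^ (n + d - 1) - V ^ (d - 1) * V" unfolding XX VV by (rule g2)
  have iden: "smult (of_nat (n + d)) g - Xa * pderiv g = V ^ (d - 1) * E"
    unfolding pg E_def by (subst g3) (rule iden_gen)
  have "X1 ^ (d - 1) dvd g" unfolding g_def d' by simp
  moreover have "X1 ^ (d - 1) dvd pderiv g"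
  proof -
    have e1: "pderiv g = f * pderiv (X1 ^ d) + X1 ^ d * pderiv f" unfolding g_def by (rule pderiv_mult)
    have e2: "pderiv (X1 ^ d) = smult (of_nat d) (X1 ^ (d - 1))" by (simp add: pderiv_power pX1)
    have "X1 ^ (d - 1) dvd pderiv (X1 ^ d)" unfolding e2 by (rule dvd_smult) simp
    moreover have "X1 ^ (d - 1) dvd X1 ^ d" unfolding d' by simp
    ultimately show ?thesis unfolding e1 by (metis dvd_add dvd_mult dvd_mult2)
  qed
  ultimately have "X1 ^ (d - 1) dvd smult (of_nat (n + d)) g - Xa * pderiv g"
    by (metis dvd_diff dvd_smult dvd_mult)
  hence "X1 ^ (d - 1) dvd E * V ^ (d - 1)" unfolding iden by (simp add: mult.commute)
  moreover have "poly (V ^ (d - 1)) a1 \<noteq> 0" using Va1 by simp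
  ultimately have dvE: "X1 ^ (d - 1) dvd E" unfolding X1_def by (rule cancel_dvd)
  have nd0: "(of_nat (n + d) :: 'a) \<noteq> 0"
  proof
    assume "(of_nat (n + d) :: 'a) = 0"
    hence "n + d = 0" by (simp only: of_nat_eq_0_iff)
    thus False using d by simp
  qed
  have "E \<noteq> 0 \<and> degree E \<le> degree V"
  proof (cases "degree V")
    case 0
    hence "pderiv V = 0" by (simp add: pderiv_eq_0_iff)
    hence "E = - smult (of_nat (n + d)) V" by (simp add: E_def)
    moreover have "V \<noteq> 0" using Va1 by auto
    ultimately show ?thesis using nd0 by simp
  next
    case (Suc D)
    have V0: "V \<noteq> 0" using Suc by auto
    hence lc: "lead_coeff V \<noteq> 0" by simp
    have c1: "coeff (pderiv V) (Suc D) = 0" by (simp add: coeff_pderiv Suc coeff_eq_0)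
    have c2: "coeff (pderiv V) D = of_nat (Suc D) * lead_coeff V" by (simp add: coeff_pderiv Suc)
    have cXV: "coeff (Xa * pderiv V) (Suc D) = of_nat (Suc D) * lead_coeff V"
      by (simp add: Xa_def c1 c2)
    have cE: "coeff E (Suc D) = of_nat d * (of_nat (Suc D) * lead_coeff V) - of_nat (n + d) * lead_coeff V"
      unfolding E_def coeff_diff coeff_smult cXV using Suc by simp
    have neq: "d * Suc D \<noteq> n + d" using dV Suc by simp
    have "coeff E (Suc D) \<noteq> 0"
    proof
      assume "coeff E (Suc D) = 0"
      hence "(of_nat d * of_nat (Suc D)) * lead_coeff V = of_nat (n + d) * lead_coeff V"
        unfolding cE by (simp add: mult.assoc)
      hence "(of_nat d * of_nat (Suc D) :: 'a) = of_nat (n + d)" using lc by simp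
      hence "(of_nat (d * Suc D) :: 'a) = of_nat (n + d)" by (simp only: of_nat_mult)
      hence "d * Suc D = n + d" by (simp only: of_nat_eq_iff)
      thus False using neq by simp
    qed
    hence "E \<noteq> 0" by auto
    moreover have "degree E \<le> degree V"
    proof -
      have "degree (pderiv V) = D" using Suc by (simp add: degree_pderiv)
      hence "degree (Xa * pderiv V) \<le> Suc D"
        using degree_mult_le[of Xa "pderiv V"] by (simp add: Xa_def)
      hence h1: "degree (smult (of_nat d) (Xa * pderiv V)) \<le> degree V"
        using Suc degree_smult_le[of "of_nat d" "Xa * pderiv V"] by linarith
      have h2: "degree (smult (of_nat (n + d)) V) \<le> degree V" by (rule degree_smult_le)
      show ?thesis unfolding E_def using h1 h2 by (rule degree_diff_le)
    qed
    ultimately show ?thesis by auto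
  qed
  hence "degree (X1 ^ (d - 1)) \<le> degree V"
    using dvd_imp_degree_le[OF dvE] by auto
  hence "d - 1 \<le> degree V" by (simp add: X1_def degree_linear_power)
  thus ?thesis using Va1 by simp
qed

lemma const_pow: "[:c:] ^ m = [:c ^ m:]"
  by (induct m) (simp_all add: mult.commute)

lemma nat_facts:
  assumes "coprime n d" "1 < (d::nat)"
  shows "d * D \<noteq> n" "d * D \<noteq> n + d"
proof -
  show 1: "d * D \<noteq> n" for D
  proof
    assume "d * D = n"
    hence "d dvd n" by auto
    hence "d = 1" using assms(1) coprime_common_divisor_nat[of n d d] by simp
    thus False using assms(2) by simp
  qed
  show "d * D \<noteq> n + d"
  proof
    assume h: "d * D = n + d"
    hence "D \<noteq> 0" using assms(2) by (cases D) auto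
    then obtain D' where "D = Suc D'" by (cases D) auto
    hence "d * D' = n" using h by simp
    thus False using 1 by blast
  qed
qed

lemma real_div_iff:
  assumes "0 < d"
  shows "(real x < real y / real d) \<longleftrightarrow> d * x < y"
proof -
  have "(real x < real y / real d) \<longleftrightarrow> real x * real d < real y" using assms by (simp add: pos_less_divide_eq)
  also have "\<dots> \<longleftrightarrow> x * d < y" by (simp only: of_nat_mult[symmetric] of_nat_less_iff)
  finally show ?thesis by (simp add: mult.commute)
qed

lemma combo:
  fixes X N F P vd Vd :: "'a::field poly"
  assumes "Vd = P - F * X" "vd = N + smult \<alpha> F"
  shows "X * vd - smult (-\<alpha>) Vd = X * N + smult \<alpha> P"
  unfolding assms sm by (simp add: algebra_simps)

lemma degN:
  fixes v f :: "'a::field poly"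
  assumes "\<alpha> \<noteq> 0" "degree f = n" "\<forall>D. d * D \<noteq> n" "0 < d"
  shows "degree (v ^ d - smult \<alpha> f) = max n (d * degree v)"
proof (cases "v = 0")
  case True
  thus ?thesis using assms by (simp add: zero_power)
next
  case False
  have dv: "degree (v ^ d) = d * degree v" using False by (simp add: degree_power_eq)
  have df: "degree (- smult \<alpha> f) = n" using assms by simp
  have eq: "v ^ d - smult \<alpha> f = v ^ d + (- smult \<alpha> f)" by simp
  show ?thesis
  proof (cases "d * degree v < n")
    case True
    thus ?thesis unfolding eq using dv df by (subst degree_add_eq_right) auto
  next
    case False
    hence "n < d * degree v" using assms(3) by (metis linorder_neqE_nat)
    thus ?thesis unfolding eq using dv df by (subst degree_add_eq_left) auto
  qed
qed

lemma minimal: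
  fixes f V :: "'a::field_char_0 poly" and p :: "nat \<Rightarrow> 'a poly"
  assumes ac: "alg_closed TYPE('a)" and d2: "2 \<le> d" and dn: "d < n"
    and ndn: "\<forall>D. d * D \<noteq> n" and degf: "degree f = n"
    and I: "f * [:-a1,1:] ^ d = [:-a,1:] ^ (n + d) - V ^ d"
    and a1: "a1 \<noteq> a" and dV: "d * degree V < n + d" and Va: "poly V a \<noteq> 0"
    and fa: "poly f a \<noteq> 0" and b: "b ^ d = poly f a"
    and pnz: "\<exists>i<d. p i \<noteq> 0" and pk: "pole_order_O n d p = k" and k0: "0 < k" and kl: "k < n + d"
    and Z: "\<forall>x y. y ^ d = poly f x \<longrightarrow> (reg_eval d p (x, y) = 0 \<longleftrightarrow> x = a \<and> y = b)"
  shows False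
proof -
  have p2: "\<forall>i. 2 \<le> i \<and> i < d \<longrightarrow> p i = 0"
  proof (intro allI impI)
    fix i assume i: "2 \<le> i \<and> i < d"
    show "p i = 0"
    proof (rule ccontr)
      assume "p i \<noteq> 0"
      hence "d * degree (p i) + n * i \<le> k" using pole_le[of i d p n] i pk by simp
      moreover have "n * 2 \<le> n * i" using i by (intro mult_le_mono2) simp
      ultimately show False using kl dn by linarith
    qed
  qed
  define v where "v = p 0"
  define w where "w = p 1"
  have reg: "reg_eval d p (x, y) = poly v x + poly w x * y" for x y
    using reg_eval2[OF d2 p2, of "(x, y)"] by (simp add: v_def w_def)
  have Z': "\<forall>x y. y ^ d = poly f x \<longrightarrow> (poly v x + poly w x * y = 0 \<longleftrightarrow> x = a \<and> y = b)"
    using Z reg by simp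
  have d0: "0 < d" using d2 by simp
  show False
  proof (cases "w = 0")
    case True
    obtain z :: 'a where z: "z ^ d = 1" "z \<noteq> 1" using ac_unity[OF ac d2] by blast
    have "poly v a + poly w a * b = 0" using Z' b by blast
    hence va: "poly v a = 0" using True by simp
    have "(z * b) ^ d = poly f a" using z b by (simp add: power_mult_distrib)
    hence "poly v a + poly w a * (z * b) = 0 \<longleftrightarrow> a = a \<and> z * b = b" using Z' by blast
    hence "z * b = b" using va True by simp
    moreover have "b \<noteq> 0" using b fa d0 by (metis zero_power)
    ultimately show False using z(2) by simp
  next
    case False
    have w1: "1 < d" using d2 by simp
    have "d * degree w + n * 1 \<le> k" using pole_le[of 1 d p n] w1 False pk by (simp add: w_def)
    hence dw: "degree w = 0"
    proof -
      assume h: "d * degree w + n * 1 \<le> k"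
      show "degree w = 0"
      proof (rule ccontr)
        assume "degree w \<noteq> 0"
        hence "d * 1 \<le> d * degree w" by (intro mult_le_mono2) simp
        thus False using h kl by linarith
      qed
    qed
    have nk: "n \<le> k" using \<open>d * degree w + n * 1 \<le> k\<close> by simp
    define w0 where "w0 = coeff w 0"
    have wc: "w = [:w0:]" using degree_0_id[OF dw] by (simp add: w0_def)
    have w00: "w0 \<noteq> 0" using False wc by simp
    define \<alpha> where "\<alpha> = (- w0) ^ d"
    have al0: "\<alpha> \<noteq> 0" using w00 by (simp add: \<alpha>_def)
    have mw: "(- w) ^ d * f = smult \<alpha> f" unfolding wc \<alpha>_def by (simp add: const_pow)
    define N where "N = v ^ d - smult \<alpha> f"
    have eN: "degree N = max n (d * degree v)" unfolding N_def using degN[OF al0 degf ndn d0] .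
    have vk: "d * degree v \<le> k"
    proof (cases "v = 0")
      case False
      thus ?thesis using pole_le[of 0 d p n] d0 pk by (simp add: v_def)
    qed simp
    have ek: "degree N \<le> k" using eN nk vk by simp
    have N0: "N \<noteq> 0" using eN dn by (metis degree_0 max_def not_less0 le_zero_eq gr_implies_not0 d0 less_le_trans)
    have roots: "\<forall>x. poly N x = 0 \<longrightarrow> x = a"
    proof (intro allI impI)
      fix x assume "poly N x = 0"
      hence "poly (v ^ d - (- w) ^ d * f) x = 0" using mw by (simp add: N_def)
      moreover have "\<forall>x y. y ^ d = poly f x \<longrightarrow> poly v x + poly w x * y = 0 \<longrightarrow> x = a" using Z' by blast
      ultimately show "x = a" using norm_root[OF ac d0] by blast
    qed
    have dvN: "[:-a,1:] ^ degree N dvd N" using only_root_dvd[OF ac N0 roots] .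
    obtain \<gamma> :: 'a where g: "\<gamma> ^ d = - \<alpha>" using ac_nth_root[OF ac d0] by blast
    have g0: "\<gamma> \<noteq> 0" using g al0 d0 by (metis neg_equal_0_iff_equal zero_power)
    define A where "A = [:-a1,1:] * v"
    define B where "B = smult \<gamma> V"
    have Ad: "A ^ d = [:-a1,1:] ^ d * v ^ d" unfolding A_def by (rule power_mult_distrib)
    have Bd: "B ^ d = smult (- \<alpha>) (V ^ d)" unfolding B_def by (simp add: smult_power g)
    have Vd: "V ^ d = [:-a,1:] ^ (n + d) - f * [:-a1,1:] ^ d" using I by simp
    have vd: "v ^ d = N + smult \<alpha> f" by (simp add: N_def)
    have AB: "A ^ d - B ^ d = [:-a1,1:] ^ d * N + smult \<alpha> ([:-a,1:] ^ (n + d))"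
      unfolding Ad Bd by (rule combo[OF Vd vd])
    have e_le: "degree N \<le> n + d" using ek kl by simp
    have "[:-a,1:] ^ degree N dvd [:-a1,1:] ^ d * N" using dvN by (rule dvd_mult)
    moreover have "[:-a,1:] ^ degree N dvd smult \<alpha> ([:-a,1:] ^ (n + d))"
      using e_le by (intro dvd_smult le_imp_power_dvd)
    ultimately have dAB: "[:-a,1:] ^ degree N dvd A ^ d - B ^ d" unfolding AB by (rule dvd_add)
    have ne: "n \<le> degree N" using eN by simp
    have ve: "d * degree v \<le> degree N" using eN by simp
    have "2 * degree v \<le> d * degree v" using d2 by (rule mult_le_mono1)
    hence "degree v + 1 < degree N" using ne ve dn d2 by linarith
    moreover have "degree A \<le> degree v + 1"
      unfolding A_def using degree_mult_le[of "[:-a1,1:]" v] by simp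
    ultimately have dA: "degree A < degree N" by linarith
    have "degree V < n"
    proof (rule ccontr)
      assume "\<not> degree V < n"
      moreover have "2 * degree V \<le> d * degree V" using d2 by (rule mult_le_mono1)
      ultimately show False using dV dn by linarith
    qed
    hence dB: "degree B < degree N" using ne g0 by (simp add: B_def)
    have "poly B a \<noteq> 0" using g0 Va by (simp add: B_def)
    have "A ^ d = B ^ d"
      by (rule key_pow[OF dAB \<open>poly B a \<noteq> 0\<close> _ d0 dA dB]) (use ne dn in linarith)
    hence "[:-a1,1:] ^ d * N + smult \<alpha> ([:-a,1:] ^ (n + d)) = 0" using AB by simp
    hence "poly ([:-a1,1:] ^ d * N + smult \<alpha> ([:-a,1:] ^ (n + d))) a1 = 0" by simp
    hence "\<alpha> * (a1 - a) ^ (n + d) = 0" using d0 by (simp add: zero_power)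
    thus False using al0 a1 by simp
  qed
qed

lemma zero_set_iff:
  assumes "{Q. on_curve f d Q \<and> reg_eval d p Q = 0} = {(a, b)}"
  shows "\<forall>x y. y ^ d = poly f x \<longrightarrow> (reg_eval d p (x, y) = 0 \<longleftrightarrow> x = a \<and> y = b)"
proof (intro allI impI)
  fix x y assume h: "y ^ d = poly f x"
  have "(x, y) \<in> {Q. on_curve f d Q \<and> reg_eval d p Q = 0} \<longleftrightarrow> (x, y) \<in> {(a, b)}"
    by (simp only: assms)
  thus "reg_eval d p (x, y) = 0 \<longleftrightarrow> x = a \<and> y = b" using h by (simp add: on_curve_def)
qed

lemma combo3:
  fixes vd Q P :: "'a::field poly"
  assumes "vd - smult \<beta> Q = smult (-\<beta>) P" "\<beta> \<noteq> 0"
  shows "Q = P - smult (- inverse \<beta>) vd"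
proof -
  have "vd = smult (-\<beta>) P + smult \<beta> Q" using assms(1) by (simp only: diff_eq_eq)
  hence "smult (- inverse \<beta>) vd = smult (- inverse \<beta> * - \<beta>) P + smult (- inverse \<beta> * \<beta>) Q"
    by (simp only: smult_add_right smult_smult)
  also have "\<dots> = P - Q"
  proof -
    have "- inverse \<beta> * - \<beta> = 1" "- inverse \<beta> * \<beta> = -1" using assms(2) by simp_all
    thus ?thesis by simp
  qed
  finally show ?thesis by simp
qed

lemma forward:
  fixes f :: "'a::field_char_0 poly"
  assumes ac: "alg_closed TYPE('a)" and d2: "2 \<le> d" and dn: "d < n"
    and nd1: "\<forall>D. d * D \<noteq> n + d" and degf: "degree f = n" and lc: "lead_coeff f = 1"
    and sq: "rsquarefree f"
    and oc: "on_curve f d (a, b)" and po: "point_order f d (a, b) (n + d)"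
  shows "\<exists>a1 V. a1 \<noteq> a \<and> d - 1 \<le> degree V \<and> d * degree V < n + d \<and> poly V a1 \<noteq> 0 \<and>
           f * [:-a1,1:] ^ d = [:-a,1:] ^ (n + d) - V ^ d"
proof -
  have d0: "0 < d" using d2 by simp
  have f0: "f \<noteq> 0" using lc by auto
  obtain p where pnz: "\<exists>i<d. p i \<noteq> 0" and pk: "pole_order_O n d p = n + d"
    and Zs: "{Q. on_curve f d Q \<and> reg_eval d p Q = 0} = {(a, b)}"
    using po degf unfolding point_order_def multiple_principal_def by auto
  have b: "b ^ d = poly f a" using oc by (simp add: on_curve_def)
  have Z: "\<forall>x y. y ^ d = poly f x \<longrightarrow> (reg_eval d p (x, y) = 0 \<longleftrightarrow> x = a \<and> y = b)"
    using zero_set_iff[OF Zs] .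
  have p2: "\<forall>i. 2 \<le> i \<and> i < d \<longrightarrow> p i = 0"
  proof (intro allI impI)
    fix i assume i: "2 \<le> i \<and> i < d"
    show "p i = 0"
    proof (rule ccontr)
      assume "p i \<noteq> 0"
      hence "d * degree (p i) + n * i \<le> n + d" using pole_le[of i d p n] i pk by simp
      moreover have "n * 2 \<le> n * i" using i by (intro mult_le_mono2) simp
      ultimately show False using dn by linarith
    qed
  qed
  define v where "v = p 0"
  define w where "w = p 1"
  have reg: "reg_eval d p (x, y) = poly v x + poly w x * y" for x y
    using reg_eval2[OF d2 p2, of "(x, y)"] by (simp add: v_def w_def)
  have Z': "\<forall>x y. y ^ d = poly f x \<longrightarrow> (poly v x + poly w x * y = 0 \<longleftrightarrow> x = a \<and> y = b)"
    using Z reg by simp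
  obtain i where i: "i < d" "p i \<noteq> 0" "n + d = d * degree (p i) + n * i"
    using pole_attained[OF pnz, of n] pk by auto
  have i1: "i = 1"
  proof -
    have "i \<noteq> 0" using i nd1 by (metis add_0_right mult_0_right)
    moreover have "\<not> 2 \<le> i" using i p2 by blast
    ultimately show ?thesis by simp
  qed
  have w0: "w \<noteq> 0" using i i1 by (simp add: w_def)
  have "d * degree w = d * 1" using i i1 by (simp add: w_def)
  hence dw: "degree w = 1" using d0 by simp
  have dv: "d * degree v < n + d"
  proof (cases "v = 0")
    case False
    hence "d * degree v \<le> n + d" using pole_le[of 0 d p n] d0 pk by (simp add: v_def)
    moreover have "d * degree v \<noteq> n + d" using nd1 by blast
    ultimately show ?thesis by simp
  qed (use d0 in simp)
  obtain a1 where ra1: "poly w a1 = 0" using ac_root[OF ac, of w] dw by auto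
  then obtain q where wq: "w = [:-a1,1:] * q" using poly_eq_0_iff_dvd by blast
  have q0: "q \<noteq> 0" using wq w0 by auto
  have "degree w = 1 + degree q" unfolding wq using q0 by (subst degree_mult_eq) simp_all
  hence dq: "degree q = 0" using dw by simp
  define c where "c = coeff q 0"
  have qc: "q = [:c:]" using degree_0_id[OF dq] by (simp add: c_def)
  have c0: "c \<noteq> 0" using q0 qc by simp
  have wc: "w = smult c [:-a1,1:]" unfolding wq qc by (simp add: mult.commute)
  define \<beta> where "\<beta> = (- c) ^ d"
  have be0: "\<beta> \<noteq> 0" using c0 by (simp add: \<beta>_def)
  define Q where "Q = [:-a1,1:] ^ d * f"
  have mw: "(- w) ^ d * f = smult \<beta> Q"
  proof -
    have h: "- w = smult (- c) [:-a1,1:]" unfolding wc by (rule smult_minus_left[symmetric])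
    have "(- w) ^ d = smult \<beta> ([:-a1,1:] ^ d)" unfolding h smult_power \<beta>_def by (rule refl)
    thus ?thesis by (simp add: Q_def)
  qed
  have X10: "[:-a1,1:] ^ d \<noteq> 0" by simp
  have dQ: "degree Q = n + d" unfolding Q_def using X10 f0
    by (subst degree_mult_eq) (simp_all add: degree_linear_power degf)
  have lQ: "lead_coeff Q = 1" unfolding Q_def by (simp add: lead_coeff_mult lead_coeff_power lc)
  define N where "N = v ^ d - smult \<beta> Q"
  have dvd_lt: "degree (v ^ d) < n + d"
  proof (cases "v = 0")
    case True thus ?thesis using d0 by (simp add: zero_power)
  next
    case False thus ?thesis using dv by (simp add: degree_power_eq)
  qed
  have dN: "degree N = n + d"
  proof -
    have h1: "degree (- smult \<beta> Q) = n + d" using dQ be0 by simp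
    have "degree (v ^ d + (- smult \<beta> Q)) = degree (- smult \<beta> Q)"
      using dvd_lt h1 by (intro degree_add_eq_right) simp
    moreover have "N = v ^ d + (- smult \<beta> Q)" by (simp add: N_def)
    ultimately show ?thesis using h1 by simp
  qed
  have N0: "N \<noteq> 0" using dN dn by auto
  have roots: "\<forall>x. poly N x = 0 \<longrightarrow> x = a"
  proof (intro allI impI)
    fix x assume "poly N x = 0"
    hence "poly (v ^ d - (- w) ^ d * f) x = 0" using mw by (simp add: N_def)
    moreover have "\<forall>x y. y ^ d = poly f x \<longrightarrow> poly v x + poly w x * y = 0 \<longrightarrow> x = a" using Z' by blast
    ultimately show "x = a" using norm_root[OF ac d0] by blast
  qed
  have "[:-a,1:] ^ (n + d) dvd N" using only_root_dvd[OF ac N0 roots] dN by simp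
  then obtain r where r: "N = [:-a,1:] ^ (n + d) * r" by (elim dvdE)
  have r0: "r \<noteq> 0" using r N0 by auto
  have "degree N = (n + d) + degree r" unfolding r using r0
    by (subst degree_mult_eq) (simp_all add: degree_linear_power)
  hence dr: "degree r = 0" using dN by simp
  define C where "C = coeff r 0"
  have rC: "r = [:C:]" using degree_0_id[OF dr] by (simp add: C_def)
  have NC: "N = smult C ([:-a,1:] ^ (n + d))" unfolding r rC by (simp add: mult.commute)
  have "coeff N (n + d) = C"
  proof -
    have "coeff N (n + d) = C * lead_coeff ([:-a,1:] ^ (n + d))" unfolding NC
      by (simp add: degree_linear_power)
    thus ?thesis by (simp add: lead_coeff_power)
  qed
  moreover have "coeff N (n + d) = - \<beta>"
  proof -
    have "coeff (v ^ d) (n + d) = 0" using dvd_lt by (simp add: coeff_eq_0)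
    moreover have "coeff Q (n + d) = 1" using lQ dQ by simp
    ultimately show ?thesis by (simp add: N_def)
  qed
  ultimately have Cb: "C = - \<beta>" by simp
  have eqN: "v ^ d - smult \<beta> Q = smult (- \<beta>) ([:-a,1:] ^ (n + d))" using NC Cb by (simp add: N_def)
  obtain \<gamma> :: 'a where g: "\<gamma> ^ d = - inverse \<beta>" using ac_nth_root[OF ac d0] by blast
  have g0: "\<gamma> \<noteq> 0" using g be0 d0 by (metis inverse_nonzero_iff_nonzero neg_equal_0_iff_equal zero_power)
  define V where "V = smult \<gamma> v"
  have Vd: "V ^ d = smult (- inverse \<beta>) (v ^ d)" by (simp add: V_def smult_power g)
  have I: "f * [:-a1,1:] ^ d = [:-a,1:] ^ (n + d) - V ^ d"
    using combo3[OF eqN be0] unfolding Vd Q_def by (simp add: mult.commute)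
  have dVv: "degree V = degree v" using g0 by (simp add: V_def)
  hence dV: "d * degree V < n + d" using dv by simp
  have a1a: "a1 \<noteq> a"
  proof
    assume aa: "a1 = a"
    have wa: "poly w a = 0" using ra1 aa by simp
    have "poly V a ^ d = 0" using arg_cong[OF I, of "\<lambda>p. poly p a"] aa d0 by (simp add: zero_power)
    hence "poly V a = 0" by simp
    hence va: "poly v a = 0" using g0 by (simp add: V_def)
    have fa: "poly f a = 0"
    proof (rule ccontr)
      assume fa: "poly f a \<noteq> 0"
      obtain z :: 'a where z: "z ^ d = 1" "z \<noteq> 1" using ac_unity[OF ac d2] by blast
      have "(z * b) ^ d = poly f a" using z b by (simp add: power_mult_distrib)
      hence "poly v a + poly w a * (z * b) = 0 \<longleftrightarrow> a = a \<and> z * b = b" using Z' by blast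
      hence "z * b = b" using va wa by simp
      moreover have "b \<noteq> 0" using b fa d0 by (metis zero_power)
      ultimately show False using z(2) by simp
    qed
    have I': "f * [:-a,1:] ^ d = [:-a,1:] ^ (n + d) - V ^ d" using I aa by simp
    show False using sq_contra[OF sq I' fa d2] dn by simp
  qed
  have "poly V a1 \<noteq> 0 \<and> d - 1 \<le> degree V" using post[OF I a1a d2 dV] .
  thus ?thesis using a1a dV I by blast
qed

lemma backward:
  fixes f V :: "'a::field_char_0 poly"
  assumes ac: "alg_closed TYPE('a)" and d2: "2 \<le> d" and dn: "d < n"
    and ndn: "\<forall>D. d * D \<noteq> n" and degf: "degree f = n" and sq: "rsquarefree f"
    and a1: "a1 \<noteq> a" and dV: "d * degree V < n + d" and Va1: "poly V a1 \<noteq> 0"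
    and I: "f * [:-a1,1:] ^ d = [:-a,1:] ^ (n + d) - V ^ d"
  shows "\<exists>b. on_curve f d (a, b) \<and> point_order f d (a, b) (n + d)"
proof -
  have d0: "0 < d" using d2 by simp
  have Va: "poly V a \<noteq> 0" using Va_nonzero[OF sq I a1 d2] .
  have Ix: "poly f x * (x - a1) ^ d = (x - a) ^ (n + d) - poly V x ^ d" for x
    using arg_cong[OF I, of "\<lambda>p. poly p x"] by simp
  have Ia: "poly f a * (a - a1) ^ d = - (poly V a ^ d)" using Ix[of a] d0 by (simp add: zero_power)
  have aa0: "(a - a1) ^ d \<noteq> 0" using a1 by simp
  have fa: "poly f a \<noteq> 0" using Ia Va by auto
  obtain z :: 'a where z: "z ^ d = -1" using ac_nth_root[OF ac d0] by blast
  have z0: "z \<noteq> 0" using z d0 by (metis zero_neq_neg_one zero_power)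
  define b where "b = poly V a / (z * (a - a1))"
  have bz: "z * (a - a1) * b = poly V a" using z0 a1 by (simp add: b_def)
  have bd: "b ^ d = poly f a"
  proof -
    have e1: "poly V a ^ d = z ^ d * (a - a1) ^ d * b ^ d" unfolding bz[symmetric] by (simp only: power_mult_distrib)
    have e2: "poly V a ^ d = - ((a - a1) ^ d * b ^ d)" using e1 z by simp
    have "(a - a1) ^ d * b ^ d = (a - a1) ^ d * poly f a" using e2 Ia by (metis minus_minus mult.commute)
    thus ?thesis using aa0 by (metis mult_left_cancel)
  qed
  define p where "p = (\<lambda>i::nat. if i = 0 then V else if i = 1 then smult (- z) [:-a1,1:] else 0)"
  have p2: "\<forall>i. 2 \<le> i \<and> i < d \<longrightarrow> p i = 0" by (simp add: p_def)
  have reg: "reg_eval d p (x, y) = poly V x + (- z) * (x - a1) * y" for x y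
    using reg_eval2[OF d2 p2, of "(x, y)"] by (simp add: p_def algebra_simps)
  have p1: "p 1 \<noteq> 0" using z0 by (simp add: p_def)
  have dp1: "degree (p 1) = 1" using z0 by (simp add: p_def)
  have pnz: "\<exists>i<d. p i \<noteq> 0" using p1 d2 by (intro exI[of _ 1]) simp
  have pole: "pole_order_O (degree f) d p = n + d"
    unfolding degf
  proof (rule pole_eqI[of d p n "n + d" 1])
    show "\<forall>i<d. p i \<noteq> 0 \<longrightarrow> d * degree (p i) + n * i \<le> n + d"
    proof (intro allI impI)
      fix i assume "i < d" "p i \<noteq> 0"
      hence "i = 0 \<or> i = 1" using p2 by (metis One_nat_def le_less_linear less_2_cases)
      thus "d * degree (p i) + n * i \<le> n + d" using dV dp1 by (auto simp: p_def)
    qed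
  qed (use d2 p1 dp1 in auto)
  have Zs: "{Q. on_curve f d Q \<and> reg_eval d p Q = 0} = {(a, b)}"
  proof (intro equalityI subsetI)
    fix Q assume "Q \<in> {Q. on_curve f d Q \<and> reg_eval d p Q = 0}"
    then obtain x y where Q: "Q = (x, y)" and yd: "y ^ d = poly f x"
      and r: "poly V x + (- z) * (x - a1) * y = 0"
      by (cases Q) (auto simp: on_curve_def reg)
    have Vx: "poly V x = z * (x - a1) * y" using r by (simp add: algebra_simps)
    hence "poly V x ^ d = - ((x - a1) ^ d * poly f x)"
      using z yd by (simp add: power_mult_distrib)
    hence "(x - a) ^ (n + d) = 0" using Ix[of x] by (simp add: algebra_simps)
    hence xa: "x = a" by simp
    have "z * (a - a1) * y = z * (a - a1) * b" using Vx xa bz by auto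
    hence "y = b" using z0 a1 by simp
    thus "Q \<in> {(a, b)}" using Q xa by simp
  next
    fix Q assume "Q \<in> {(a, b)}"
    hence Q: "Q = (a, b)" by simp
    have "poly V a + (- z) * (a - a1) * b = 0" using bz by (simp add: algebra_simps)
    thus "Q \<in> {Q. on_curve f d Q \<and> reg_eval d p Q = 0}" using Q bd by (simp add: on_curve_def reg)
  qed
  have mp: "multiple_principal f d (a, b) (n + d)"
    unfolding multiple_principal_def using pnz pole Zs by blast
  have nmp: "\<not> multiple_principal f d (a, b) k" if k: "0 < k" "k < n + d" for k
  proof
    assume "multiple_principal f d (a, b) k"
    then obtain p' where pnz': "\<exists>i<d. p' i \<noteq> 0" and pk': "pole_order_O n d p' = k"
      and Zs': "{Q. on_curve f d Q \<and> reg_eval d p' Q = 0} = {(a, b)}"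
      unfolding multiple_principal_def degf by blast
    show False using minimal[OF ac d2 dn ndn degf I a1 dV Va fa bd pnz' pk' k zero_set_iff[OF Zs']] .
  qed
  have "point_order f d (a, b) (n + d)" unfolding point_order_def using mp nmp d0 by auto
  moreover have "on_curve f d (a, b)" using bd by (simp add: on_curve_def)
  ultimately show ?thesis by blast
qed

theorem theorem6p1:
  fixes f :: "'a::field_char_0 poly" and d n :: nat and a :: 'a
  assumes "alg_closed TYPE('a)"
    and "1 < d" and "d < n" and "coprime n d"
    and "lead_coeff f = 1" and "degree f = n" and "rsquarefree f"
  shows "((\<exists>b. on_curve f d (a, b) \<and> point_order f d (a, b) (n + d)) \<longleftrightarrow>
           (\<exists>a1 v. a1 \<noteq> a \<and> d - 1 \<le> degree v \<and>
              real (degree v) < real (n + d) / real d \<and> poly v a1 \<noteq> 0 \<and>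
              f * [:-a1, 1:] ^ d = [:-a, 1:] ^ (n + d) - v ^ d))
         \<and> ((\<exists>b. on_curve f d (a, b) \<and> point_order f d (a, b) (n + d)) \<longrightarrow> n + d > d^2 - d)"
proof -
  have d2: "2 \<le> d" using assms(2) by simp
  have d0: "0 < d" using assms(2) by simp
  have ndn: "\<forall>D. d * D \<noteq> n" using nat_facts(1)[OF assms(4) assms(2)] by blast
  have nd1: "\<forall>D. d * D \<noteq> n + d" using nat_facts(2)[OF assms(4) assms(2)] by blast
  have fw: "\<exists>a1 V. a1 \<noteq> a \<and> d - 1 \<le> degree V \<and> d * degree V < n + d \<and> poly V a1 \<noteq> 0 \<and>
           f * [:-a1,1:] ^ d = [:-a,1:] ^ (n + d) - V ^ d"
    if "\<exists>b. on_curve f d (a, b) \<and> point_order f d (a, b) (n + d)"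
    using that forward[OF assms(1) d2 assms(3) nd1 assms(6) assms(5) assms(7)] by blast
  show ?thesis
  proof (intro conjI iffI impI)
    assume h: "\<exists>b. on_curve f d (a, b) \<and> point_order f d (a, b) (n + d)"
    then obtain a1 V where r: "a1 \<noteq> a" "d - 1 \<le> degree V" "d * degree V < n + d" "poly V a1 \<noteq> 0"
      "f * [:-a1,1:] ^ d = [:-a,1:] ^ (n + d) - V ^ d" using fw by blast
    have "real (degree V) < real (n + d) / real d" using r(3) real_div_iff[OF d0] by blast
    thus "\<exists>a1 v. a1 \<noteq> a \<and> d - 1 \<le> degree v \<and>
              real (degree v) < real (n + d) / real d \<and> poly v a1 \<noteq> 0 \<and>
              f * [:-a1, 1:] ^ d = [:-a, 1:] ^ (n + d) - v ^ d" using r by blast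
  next
    assume "\<exists>a1 v. a1 \<noteq> a \<and> d - 1 \<le> degree v \<and>
              real (degree v) < real (n + d) / real d \<and> poly v a1 \<noteq> 0 \<and>
              f * [:-a1, 1:] ^ d = [:-a, 1:] ^ (n + d) - v ^ d"
    then obtain a1 v where r: "a1 \<noteq> a" "real (degree v) < real (n + d) / real d" "poly v a1 \<noteq> 0"
      "f * [:-a1, 1:] ^ d = [:-a, 1:] ^ (n + d) - v ^ d" by blast
    have "d * degree v < n + d" using r(2) real_div_iff[OF d0] by blast
    thus "\<exists>b. on_curve f d (a, b) \<and> point_order f d (a, b) (n + d)"
      using backward[OF assms(1) d2 assms(3) ndn assms(6) assms(7) r(1) _ r(3) r(4)] by blast
  next
    assume h: "\<exists>b. on_curve f d (a, b) \<and> point_order f d (a, b) (n + d)"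
    from fw[OF h] obtain a1 and V :: "'a poly" where r: "d - 1 \<le> degree V" "d * degree V < n + d" "a1 \<noteq> a" by blast
    have "d * (d - 1) \<le> d * degree V" using r(1) by (rule mult_le_mono2)
    moreover have "d ^ 2 - d = d * (d - 1)" by (simp add: power2_eq_square diff_mult_distrib2)
    ultimately show "n + d > d ^ 2 - d" using r(2) by linarith
  qed
qed

end
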